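(* Let $\Omega \subseteq \mathbb{R}^d$ be a bounded open convex set and $K \subseteq \mathbb{R}^d$ a compact set whose interior contains the origin. Then $d_{\mathrm{CT},K}$ is a distance on $\mathcal{P}(\Omega)$: (i) $d_{\mathrm{CT},K}(\mu_+,\mu_-) \geq 0$ for all $\mu_+,\mu_- \in \mathcal{P}(\Omega)$; (ii) $d_{\mathrm{CT},K}(\mu_+,\mu_-) = 0$ if and only if $\mu_+ = \mu_-$; (iii) for all $\mu_1,\mu_2,\mu_3 \in \mathcal{P}(\Omega)$, $d_{\mathrm{CT},K}(\mu_1,\mu_2) \leq d_{\mathrm{CT},K}(\mu_1,\mu_3) + d_{\mathrm{CT},K}(\mu_3,\mu_2)$.
   Context: $\mathcal{P}(\Omega)$ is the set of Borel probability measures on $\Omega$. Let $\mathcal{A} = \{ u : \Omega \to \mathbb{R} \,:\, u \text{ convex and } \nabla u \in K \text{ almost everywhere}\}$. The Choquet–Toland discrepancy is $D_{\mathrm{CT},K}(\mu_+\|\mu_-) = \sup_{\nu \in \mathcal{P}(K)} \{\frac12 W_2^2(\mu_+,\nu) - \frac12 W_2^2(\mu_-,\nu)\}$ ($W_2$ the 2-Wasserstein distance), the Variational Dominance Criterion is $\mathrm{VDC}_K(\mu_+\|\mu_-) = \sup_{u\in\mathcal{A}} \int_\Omega u\, d(\mu_- - \mu_+)$, and the Choquet–Toland distance is $d_{\mathrm{CT},K}(\mu_+,\mu_-) = D_{\mathrm{CT},K}(\mu_+\|\mu_-) + D_{\mathrm{CT},K}(\mu_-\|\mu_+)$, which (by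 Toland duality) equals $\mathrm{VDC}_K(\mu_+\|\mu_-) + \mathrm{VDC}_K(\mu_-\|\mu_+)$. *)

theory Defs
  imports "HOL-Probability.Probability"
begin

text \<open>Borel probability measures on a Borel set S of the ambient Euclidean space,
  represented as probability measures on the Borel sigma algebra of the whole space
  that are concentrated on S.\<close>
definition prob_on :: "'a::euclidean_space set \<Rightarrow> 'a measure \<Rightarrow> bool" where
  "prob_on S \<mu> \<longleftrightarrow> sets \<mu> = sets borel \<and> prob_space \<mu> \<and> emeasure \<mu> S = 1"

definition couplings :: "'a::euclidean_space measure \<Rightarrow> 'a measure \<Rightarrow> ('a \<times> 'a) measure set" where
  "couplings \<mu> \<nu> = {\<pi>. sets \<pi> = sets (borel \<Otimes>\<^sub>M borel) \<and> prob_space \<pi> \<and>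
      distr \<pi> borel fst = \<mu> \<and> distr \<pi> borel snd = \<nu>}"

definition W2sq :: "'a::euclidean_space measure \<Rightarrow> 'a measure \<Rightarrow> ennreal" where
  "W2sq \<mu> \<nu> = (INF \<pi>\<in>couplings \<mu> \<nu>. \<integral>\<^sup>+ p. ennreal ((norm (fst p - snd p))\<^sup>2) \<partial>\<pi>)"

definition D_CT :: "'a::euclidean_space set \<Rightarrow> 'a measure \<Rightarrow> 'a measure \<Rightarrow> real" where
  "D_CT K \<mu>p \<mu>m = (SUP \<nu>\<in>{\<nu>. prob_on K \<nu>}.
      (1/2) * enn2real (W2sq \<mu>p \<nu>) - (1/2) * enn2real (W2sq \<mu>m \<nu>))"

definition d_CT :: "'a::euclidean_space set \<Rightarrow> 'a measure \<Rightarrow> 'a measure \<Rightarrow> real" where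
  "d_CT K \<mu>p \<mu>m = D_CT K \<mu>p \<mu>m + D_CT K \<mu>m \<mu>p"

end

theory Submission
  imports Defs
begin

lemma prob_on_AE:
  assumes "prob_on S \<mu>" shows "AE x in \<mu>. x \<in> S"
proof -
  interpret prob_space \<mu> using assms by (simp add: prob_on_def)
  have sets: "sets \<mu> = sets borel" using assms by (simp add: prob_on_def)
  have e: "emeasure \<mu> S = 1" using assms by (simp add: prob_on_def)
  then have "S \<in> sets \<mu>" using emeasure_notin_sets by fastforce
  then show ?thesis using e AE_in_set_eq_1 emeasure_eq_measure by simp
qed

lemma prob_on_integrable:
  fixes f :: "'a::euclidean_space \<Rightarrow> real"
  assumes "prob_on S \<mu>" "f \<in> borel_measurable borel" "\<And>x. x \<in> S \<Longrightarrow> \<bar>f x\<bar> \<le> C"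
  shows "integrable \<mu> f"
proof -
  interpret prob_space \<mu> using assms by (simp add: prob_on_def)
  have sets: "sets \<mu> = sets borel" using assms by (simp add: prob_on_def)
  show ?thesis
    apply (rule integrable_const_bound[where B=C])
    using prob_on_AE[OF assms(1)] assms(3) apply (auto elim: AE_mp)[1]
    using assms(2) by (simp add: measurable_cong_sets[OF sets refl])
qed

lemma meas_pi:
  assumes "sets \<pi> = sets (borel \<Otimes>\<^sub>M borel)"
  shows "measurable \<pi> N = measurable (borel \<Otimes>\<^sub>M borel) N"
  using measurable_cong_sets[OF assms refl] .

lemma meas_mu:
  assumes "sets \<mu> = sets borel"
  shows "measurable \<mu> N = measurable borel N"
  using measurable_cong_sets[OF assms refl] .


lemma nn_bound_prob:
  fixes g :: "'a::euclidean_space \<Rightarrow> real"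
  assumes "prob_on S \<mu>" "\<And>x. x \<in> S \<Longrightarrow> g x \<le> C"
  shows "(\<integral>\<^sup>+x. ennreal (g x) \<partial>\<mu>) \<le> ennreal C"
proof -
  interpret prob_space \<mu> using assms by (simp add: prob_on_def)
  have "(\<integral>\<^sup>+x. ennreal (g x) \<partial>\<mu>) \<le> (\<integral>\<^sup>+x. ennreal C \<partial>\<mu>)"
    apply (rule nn_integral_mono_AE)
    using prob_on_AE[OF assms(1)] assms(2) by (auto elim: AE_mp intro: ennreal_leI)
  also have "\<dots> = ennreal C" by (simp add: emeasure_space_1)
  finally show ?thesis .
qed

lemma coupling_fst:
  assumes "\<pi> \<in> couplings \<mu> \<nu>" "f \<in> borel_measurable borel"
  shows "(\<integral>\<^sup>+p. f (fst p) \<partial>\<pi>) = (\<integral>\<^sup>+x. f x \<partial>\<mu>)"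
proof -
  have s: "sets \<pi> = sets (borel \<Otimes>\<^sub>M borel)" and d: "distr \<pi> borel fst = \<mu>"
    using assms by (auto simp: couplings_def)
  have "(\<integral>\<^sup>+x. f x \<partial>(distr \<pi> borel fst)) = (\<integral>\<^sup>+p. f (fst p) \<partial>\<pi>)"
    by (rule nn_integral_distr) (auto simp: meas_pi[OF s] assms(2))
  then show ?thesis using d by simp
qed

lemma coupling_snd:
  assumes "\<pi> \<in> couplings \<mu> \<nu>" "f \<in> borel_measurable borel"
  shows "(\<integral>\<^sup>+p. f (snd p) \<partial>\<pi>) = (\<integral>\<^sup>+x. f x \<partial>\<nu>)"
proof -
  have s: "sets \<pi> = sets (borel \<Otimes>\<^sub>M borel)" and d: "distr \<pi> borel snd = \<nu>"
    using assms by (auto simp: couplings_def)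
  have "(\<integral>\<^sup>+x. f x \<partial>(distr \<pi> borel snd)) = (\<integral>\<^sup>+p. f (snd p) \<partial>\<pi>)"
    by (rule nn_integral_distr) (auto simp: meas_pi[OF s] assms(2))
  then show ?thesis using d by simp
qed

lemma coupling_fst_int:
  fixes f :: "'a::euclidean_space \<Rightarrow> real"
  assumes "\<pi> \<in> couplings \<mu> \<nu>" "f \<in> borel_measurable borel"
  shows "(\<integral>p. f (fst p) \<partial>\<pi>) = (\<integral>x. f x \<partial>\<mu>)"
proof -
  have s: "sets \<pi> = sets (borel \<Otimes>\<^sub>M borel)" and d: "distr \<pi> borel fst = \<mu>"
    using assms by (auto simp: couplings_def)
  have "(\<integral>x. f x \<partial>(distr \<pi> borel fst)) = (\<integral>p. f (fst p) \<partial>\<pi>)"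
    by (rule integral_distr) (auto simp: meas_pi[OF s] assms(2))
  then show ?thesis using d by simp
qed

lemma coupling_snd_int:
  fixes f :: "'a::euclidean_space \<Rightarrow> real"
  assumes "\<pi> \<in> couplings \<mu> \<nu>" "f \<in> borel_measurable borel"
  shows "(\<integral>p. f (snd p) \<partial>\<pi>) = (\<integral>x. f x \<partial>\<nu>)"
proof -
  have s: "sets \<pi> = sets (borel \<Otimes>\<^sub>M borel)" and d: "distr \<pi> borel snd = \<nu>"
    using assms by (auto simp: couplings_def)
  have "(\<integral>x. f x \<partial>(distr \<pi> borel snd)) = (\<integral>p. f (snd p) \<partial>\<pi>)"
    by (rule integral_distr) (auto simp: meas_pi[OF s] assms(2))
  then show ?thesis using d by simp
qed

lemma sq_ineq: "(norm (x - y::'a::euclidean_space))\<^sup>2 \<le> 2 * (norm x)\<^sup>2 + 2 * (norm y)\<^sup>2"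
proof -
  have "norm (x - y) \<le> norm x + norm y" by (rule norm_triangle_ineq4)
  then have "(norm (x - y))\<^sup>2 \<le> (norm x + norm y)\<^sup>2" by (simp add: power_mono)
  also have "\<dots> \<le> 2 * (norm x)\<^sup>2 + 2 * (norm y)\<^sup>2"
  proof -
    have "0 \<le> (norm x - norm y)\<^sup>2" by simp
    then show ?thesis by (simp add: power2_eq_square algebra_simps)
  qed
  finally show ?thesis .
qed

lemma cost_bound:
  fixes \<mu> \<nu> :: "'a::euclidean_space measure"
  assumes "\<pi> \<in> couplings \<mu> \<nu>" "prob_on S \<mu>" "prob_on S' \<nu>" "S \<subseteq> cball 0 R" "S' \<subseteq> cball 0 R"
  shows "(\<integral>\<^sup>+p. ennreal ((norm (fst p - snd p))\<^sup>2) \<partial>\<pi>) \<le> ennreal (4 * R\<^sup>2)"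
proof -
  have s: "sets \<pi> = sets (borel \<Otimes>\<^sub>M borel)" using assms by (auto simp: couplings_def)
  have "(\<integral>\<^sup>+p. ennreal ((norm (fst p - snd p))\<^sup>2) \<partial>\<pi>)
     \<le> (\<integral>\<^sup>+p. ennreal (2 * (norm (fst p))\<^sup>2) + ennreal (2 * (norm (snd p))\<^sup>2) \<partial>\<pi>)"
    apply (rule nn_integral_mono)
    using sq_ineq by (simp add: ennreal_plus[symmetric] del: ennreal_plus)
  also have "\<dots> = (\<integral>\<^sup>+p. ennreal (2 * (norm (fst p))\<^sup>2) \<partial>\<pi>) + (\<integral>\<^sup>+p. ennreal (2 * (norm (snd p))\<^sup>2) \<partial>\<pi>)"
    by (rule nn_integral_add) (auto simp: meas_pi[OF s])
  also have "\<dots> = (\<integral>\<^sup>+x. ennreal (2 * (norm x)\<^sup>2) \<partial>\<mu>) + (\<integral>\<^sup>+x. ennreal (2 * (norm x)\<^sup>2) \<partial>\<nu>)"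
    using coupling_fst[OF assms(1), of "\<lambda>x. ennreal (2 * (norm x)\<^sup>2)"]
      coupling_snd[OF assms(1), of "\<lambda>x. ennreal (2 * (norm x)\<^sup>2)"] by simp
  also have "\<dots> \<le> ennreal (2 * R\<^sup>2) + ennreal (2 * R\<^sup>2)"
  proof (rule add_mono)
    have b: "2 * (norm x)\<^sup>2 \<le> 2 * R\<^sup>2" if "norm x \<le> R" for x :: 'a
      using that by (simp add: power_mono)
    show "(\<integral>\<^sup>+x. ennreal (2 * (norm x)\<^sup>2) \<partial>\<mu>) \<le> ennreal (2 * R\<^sup>2)"
      by (rule nn_bound_prob[OF assms(2)]) (use assms(4) b in auto)
    show "(\<integral>\<^sup>+x. ennreal (2 * (norm x)\<^sup>2) \<partial>\<nu>) \<le> ennreal (2 * R\<^sup>2)"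
      by (rule nn_bound_prob[OF assms(3)]) (use assms(5) b in auto)
  qed
  also have "\<dots> = ennreal (4 * R\<^sup>2)" by (simp add: ennreal_plus[symmetric] del: ennreal_plus)
  finally show ?thesis .
qed

lemma W2_bound:
  fixes \<mu> \<nu> :: "'a::euclidean_space measure"
  assumes "prob_on S \<mu>" "prob_on S' \<nu>" "S \<subseteq> cball 0 R" "S' \<subseteq> cball 0 R"
  shows "enn2real (W2sq \<mu> \<nu>) \<le> 4 * R\<^sup>2"
proof (cases "couplings \<mu> \<nu> = {}")
  case True then show ?thesis by (simp add: W2sq_def)
next
  case False
  then obtain \<pi> where p: "\<pi> \<in> couplings \<mu> \<nu>" by auto
  have "W2sq \<mu> \<nu> \<le> (\<integral>\<^sup>+p. ennreal ((norm (fst p - snd p))\<^sup>2) \<partial>\<pi>)"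
    unfolding W2sq_def by (rule INF_lower[OF p])
  also have "\<dots> \<le> ennreal (4 * R\<^sup>2)" by (rule cost_bound[OF p assms])
  finally show ?thesis by (intro enn2real_leI) auto
qed


lemma space_borel_eq: "sets \<mu> = sets borel \<Longrightarrow> space \<mu> = UNIV"
  using sets_eq_imp_space_eq by fastforce

lemma product_coupling:
  fixes \<mu> \<nu> :: "'a::euclidean_space measure"
  assumes "prob_on S \<mu>" "prob_on S' \<nu>"
  shows "\<mu> \<Otimes>\<^sub>M \<nu> \<in> couplings \<mu> \<nu>"
proof -
  interpret M: prob_space \<mu> using assms by (simp add: prob_on_def)
  interpret N: prob_space \<nu> using assms by (simp add: prob_on_def)
  interpret P: pair_prob_space \<mu> \<nu> by unfold_locales
  have s1: "sets \<mu> = sets borel" and s2: "sets \<nu> = sets borel" using assms by (auto simp: prob_on_def)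
  have sp: "space \<mu> = UNIV" "space \<nu> = UNIV" using s1 s2 space_borel_eq by auto
  have "distr (\<mu> \<Otimes>\<^sub>M \<nu>) borel fst = distr (\<mu> \<Otimes>\<^sub>M \<nu>) \<mu> fst"
    by (rule distr_cong) (auto simp: s1)
  also have "\<dots> = \<mu>" by (rule N.distr_pair_fst)
  finally have f: "distr (\<mu> \<Otimes>\<^sub>M \<nu>) borel fst = \<mu>" .
  have g: "distr (\<mu> \<Otimes>\<^sub>M \<nu>) borel snd = \<nu>"
  proof (rule measure_eqI)
    show "sets (distr (\<mu> \<Otimes>\<^sub>M \<nu>) borel snd) = sets \<nu>" by (simp add: s2)
    fix A assume A: "A \<in> sets (distr (\<mu> \<Otimes>\<^sub>M \<nu>) borel snd)"
    then have A': "A \<in> sets \<nu>" by (simp add: s2)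
    have "emeasure (distr (\<mu> \<Otimes>\<^sub>M \<nu>) borel snd) A = emeasure (\<mu> \<Otimes>\<^sub>M \<nu>) (snd -` A \<inter> space (\<mu> \<Otimes>\<^sub>M \<nu>))"
      using A by (intro emeasure_distr) (auto simp: measurable_cong_sets[OF sets_pair_measure_cong[OF s1 s2] refl])
    also have "snd -` A \<inter> space (\<mu> \<Otimes>\<^sub>M \<nu>) = space \<mu> \<times> A"
      by (auto simp: space_pair_measure sp)
    also have "emeasure (\<mu> \<Otimes>\<^sub>M \<nu>) (space \<mu> \<times> A) = emeasure \<mu> (space \<mu>) * emeasure \<nu> A"
      by (rule N.emeasure_pair_measure_Times) (auto simp: A')
    finally show "emeasure (distr (\<mu> \<Otimes>\<^sub>M \<nu>) borel snd) A = emeasure \<nu> A"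
      by (simp add: M.emeasure_space_1)
  qed
  show ?thesis unfolding couplings_def
    using f g P.prob_space_axioms sets_pair_measure_cong[OF s1 s2] by auto
qed

lemma map_coupling:
  fixes b :: "'a::euclidean_space measure"
  assumes "prob_on S b" "T \<in> borel_measurable borel"
  shows "distr b (borel \<Otimes>\<^sub>M borel) (\<lambda>x. (x, T x)) \<in> couplings b (distr b borel T)"
proof -
  interpret M: prob_space b using assms by (simp add: prob_on_def)
  have s1: "sets b = sets borel" using assms by (auto simp: prob_on_def)
  have m: "(\<lambda>x. (x, T x)) \<in> measurable b (borel \<Otimes>\<^sub>M borel)"
    using assms(2) by (simp add: meas_mu[OF s1])
  have "distr (distr b (borel \<Otimes>\<^sub>M borel) (\<lambda>x. (x, T x))) borel fst = distr b borel (fst \<circ> (\<lambda>x. (x, T x)))"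
    by (rule distr_distr[OF _ m]) simp
  also have "\<dots> = distr b borel (\<lambda>x. x)" by (simp add: comp_def)
  also have "\<dots> = b" by (rule distr_id2) (simp add: s1)
  finally have f: "distr (distr b (borel \<Otimes>\<^sub>M borel) (\<lambda>x. (x, T x))) borel fst = b" .
  have "distr (distr b (borel \<Otimes>\<^sub>M borel) (\<lambda>x. (x, T x))) borel snd = distr b borel (snd \<circ> (\<lambda>x. (x, T x)))"
    by (rule distr_distr[OF _ m]) simp
  also have "\<dots> = distr b borel T" by (simp add: comp_def)
  finally have g: "distr (distr b (borel \<Otimes>\<^sub>M borel) (\<lambda>x. (x, T x))) borel snd = distr b borel T" .
  show ?thesis unfolding couplings_def
    using f g M.prob_space_distr[OF m] by auto
qed

definition Fct :: "'a::euclidean_space measure \<Rightarrow> 'a measure \<Rightarrow> 'a measure \<Rightarrow> real" where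
  "Fct a b \<nu> = (1/2) * enn2real (W2sq a \<nu>) - (1/2) * enn2real (W2sq b \<nu>)"

lemma D_CT_Fct: "D_CT K a b = (SUP \<nu>\<in>{\<nu>. prob_on K \<nu>}. Fct a b \<nu>)"
  unfolding D_CT_def Fct_def by simp

lemma Fct_bdd:
  assumes "prob_on S a" "S \<subseteq> cball 0 R" "K \<subseteq> cball 0 R"
  shows "bdd_above (Fct a b ` {\<nu>. prob_on K \<nu>})"
proof (rule bdd_aboveI2)
  fix \<nu> assume "\<nu> \<in> {\<nu>. prob_on K \<nu>}"
  then have "enn2real (W2sq a \<nu>) \<le> 4 * R\<^sup>2" using W2_bound[OF assms(1) _ assms(2,3)] by auto
  then show "Fct a b \<nu> \<le> 2 * R\<^sup>2" unfolding Fct_def using enn2real_nonneg[of "W2sq b \<nu>"] by linarith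
qed

lemma Fct_le_D:
  assumes "prob_on S a" "S \<subseteq> cball 0 R" "K \<subseteq> cball 0 R" "prob_on K \<nu>"
  shows "Fct a b \<nu> \<le> D_CT K a b"
  unfolding D_CT_Fct by (rule cSUP_upper) (use assms Fct_bdd[OF assms(1-3)] in auto)

lemma Fct_antisym: "Fct b a \<nu> = - Fct a b \<nu>" unfolding Fct_def by simp

lemma Fct_split: "Fct a b \<nu> = Fct a c \<nu> + Fct c b \<nu>" unfolding Fct_def by simp

lemma dirac_prob_on: "0 \<in> K \<Longrightarrow> K \<in> sets borel \<Longrightarrow> prob_on K (return borel 0)"
  unfolding prob_on_def by (auto simp: prob_space_return emeasure_return)


lemma fin_if_meas:
  fixes g :: "'a::euclidean_space \<Rightarrow> real"
  assumes "finite F"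
  shows "(\<lambda>y. if y \<in> F then g y else c) \<in> borel_measurable borel"
proof -
  have eq: "(\<lambda>y. if y \<in> F then g y else c) = (\<lambda>y. c + (\<Sum>z\<in>F. if y = z then g z - c else 0))"
    using assms by (auto simp: sum.delta)
  show ?thesis unfolding eq by measurable
qed

lemma norm_diff_sq_exp: "(norm (x - y::'a::euclidean_space))\<^sup>2 = (norm x)\<^sup>2 - 2 * (x \<bullet> y) + (norm y)\<^sup>2"
  by (simp add: power2_norm_eq_inner inner_diff inner_commute algebra_simps)


lemma lemmaA:
  fixes a b :: "'a::euclidean_space measure" and T :: "'a \<Rightarrow> 'a" and u :: "'a \<Rightarrow> real"
  assumes a: "prob_on \<Omega> a" and b: "prob_on \<Omega> b"
    and \<Omega>: "\<Omega> \<subseteq> cball 0 R" and K: "K \<subseteq> cball 0 R" and Kb: "K \<in> sets borel"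
    and Tm: "T \<in> borel_measurable borel" and TK: "\<And>x. T x \<in> K" and Tf: "finite (range T)"
    and um: "u \<in> borel_measurable borel"
    and sub: "\<And>x z. u x + (z - x) \<bullet> T x \<le> u z"
  shows "((\<integral>x. (norm x)\<^sup>2 \<partial>a) - (\<integral>x. (norm x)\<^sup>2 \<partial>b)) / 2 - (\<integral>x. u x \<partial>a) + (\<integral>x. u x \<partial>b) \<le> D_CT K a b"
proof -
  have sa: "sets a = sets borel" and sb: "sets b = sets borel" using a b by (auto simp: prob_on_def)
  interpret A: prob_space a using a by (simp add: prob_on_def)
  interpret Bp: prob_space b using b by (simp add: prob_on_def)
  have spb: "space b = UNIV" using sb space_borel_eq by auto
  define \<nu> where "\<nu> = distr b borel T"
  have Tmb: "T \<in> measurable b borel" using Tm by (simp add: meas_mu[OF sb])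
  have \<nu>K: "prob_on K \<nu>"
    unfolding prob_on_def \<nu>_def
    using Bp.prob_space_distr[OF Tmb] emeasure_distr[OF Tmb Kb] TK Bp.emeasure_space_1 spb
    by (auto simp: vimage_def)
  have TR: "norm (T x) \<le> R" for x using TK[of x] K mem_cball_0 by blast
  have R0: "0 \<le> R" using TR[of 0] norm_ge_zero order_trans by blast
  have ub: "\<bar>u x\<bar> \<le> \<bar>u 0\<bar> + R * R" if "x \<in> \<Omega>" for x
  proof -
    have xR: "norm x \<le> R" using that \<Omega> mem_cball_0 by blast
    have "\<bar>x \<bullet> T x\<bar> \<le> R * R"
      using Cauchy_Schwarz_ineq2[of x "T x"] mult_mono[OF xR TR[of x] R0 norm_ge_zero] by linarith
    moreover have "\<bar>x \<bullet> T 0\<bar> \<le> R * R"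
      using Cauchy_Schwarz_ineq2[of x "T 0"] mult_mono[OF xR TR[of 0] R0 norm_ge_zero] by linarith
    moreover have "u x + (0 - x) \<bullet> T x \<le> u 0" by (rule sub)
    moreover have "u 0 + (x - 0) \<bullet> T 0 \<le> u x" by (rule sub)
    ultimately show ?thesis by (simp add: inner_diff_left)
  qed
  define B\<phi> where "B\<phi> = R\<^sup>2 + 2 * (\<bar>u 0\<bar> + R * R)"
  have B\<phi>0: "0 \<le> B\<phi>" unfolding B\<phi>_def using R0 by simp
  have \<phi>b: "\<bar>(norm x)\<^sup>2 - 2 * u x\<bar> \<le> B\<phi>" if "x \<in> \<Omega>" for x
  proof -
    have "norm x \<le> R" using that \<Omega> mem_cball_0 by blast
    then have "(norm x)\<^sup>2 \<le> R\<^sup>2" by (simp add: power_mono)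
    then show ?thesis using ub[OF that] zero_le_power2[of "norm x"] unfolding B\<phi>_def abs_le_iff by (smt (verit))
  qed
  define sel where "sel y = (SOME x. T x = y)" for y
  have sel: "T (sel (T x)) = T x" for x unfolding sel_def by (rule someI) auto
  define g where "g y = (norm y)\<^sup>2 - 2 * (sel y \<bullet> y - u (sel y))" for y
  define B\<psi> where "B\<psi> = Max (insert 0 ((\<lambda>y. \<bar>g y\<bar>) ` range T))"
  have gb: "\<bar>g y\<bar> \<le> B\<psi>" if "y \<in> range T" for y
    unfolding B\<psi>_def using that Tf by (intro Max_ge) auto
  have B\<psi>0: "0 \<le> B\<psi>" unfolding B\<psi>_def using Tf by (intro Max_ge) auto
  define B where "B = B\<phi> + B\<psi>"
  define \<phi> where "\<phi> x = max (-B) (min B ((norm x)\<^sup>2 - 2 * u x))" for x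
  define \<psi> where "\<psi> y = (if y \<in> range T then g y else -2 * B)" for y
  have F1: "\<phi> x + \<psi> y \<le> (norm (x - y))\<^sup>2" for x y
  proof (cases "y \<in> range T")
    case True
    then obtain x0 where y: "y = T x0" by auto
    have s: "T (sel y) = y" using sel y by simp
    have "u (sel y) + (x - sel y) \<bullet> T (sel y) \<le> u x" by (rule sub)
    then have i1: "(norm x)\<^sup>2 - 2 * u x + g y \<le> (norm (x - y))\<^sup>2"
      unfolding g_def norm_diff_sq_exp s by (simp add: inner_diff_left)
    have i2: "-B + g y \<le> (norm (x - y))\<^sup>2" using gb[OF True] B\<phi>0 zero_le_power2[of "norm (x - y)"] unfolding B_def by (smt (verit))
    have "\<phi> x \<le> max (-B) ((norm x)\<^sup>2 - 2 * u x)" unfolding \<phi>_def by simp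
    then show ?thesis using i1 i2 True unfolding \<psi>_def by (simp add: max_def split: if_splits)
  next
    case False
    have "\<phi> x \<le> B" unfolding \<phi>_def using B\<phi>0 B\<psi>0 B_def by simp
    then show ?thesis using False B\<phi>0 B\<psi>0 unfolding \<psi>_def B_def by simp (smt (verit) zero_le_power2)
  qed
  have F4: "\<phi> x = (norm x)\<^sup>2 - 2 * u x" if "x \<in> \<Omega>" for x
    using \<phi>b[OF that] B\<psi>0 unfolding \<phi>_def B_def by (simp add: abs_le_iff)
  have F2: "(norm (x - T x))\<^sup>2 \<le> \<phi> x + \<psi> (T x)" if "x \<in> \<Omega>" for x
  proof -
    have "u x + (sel (T x) - x) \<bullet> T x \<le> u (sel (T x))" by (rule sub)
    then show ?thesis unfolding F4[OF that] \<psi>_def g_def norm_diff_sq_exp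
      by (simp add: inner_diff_left)
  qed
  have \<phi>bd: "\<bar>\<phi> x\<bar> \<le> B" for x unfolding \<phi>_def using B\<phi>0 B\<psi>0 B_def by simp
  have \<psi>bd: "\<bar>\<psi> y\<bar> \<le> 2 * B" for y
  proof (cases "y \<in> range T")
    case True then show ?thesis unfolding \<psi>_def using gb[OF True] B\<phi>0 B\<psi>0 B_def by simp
  next
    case False then show ?thesis unfolding \<psi>_def using B\<phi>0 B\<psi>0 B_def by simp
  qed
  have \<phi>m: "\<phi> \<in> borel_measurable borel" unfolding \<phi>_def using um by measurable
  have \<psi>m: "\<psi> \<in> borel_measurable borel" unfolding \<psi>_def by (rule fin_if_meas[OF Tf])
  define L where "L = (\<integral>x. \<phi> x \<partial>a) + (\<integral>y. \<psi> y \<partial>\<nu>)"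
  have cost_ge: "ennreal L \<le> (\<integral>\<^sup>+p. ennreal ((norm (fst p - snd p))\<^sup>2) \<partial>\<pi>)"
    if \<pi>: "\<pi> \<in> couplings a \<nu>" for \<pi>
  proof -
    have s: "sets \<pi> = sets (borel \<Otimes>\<^sub>M borel)" and pp: "prob_space \<pi>" using \<pi> by (auto simp: couplings_def)
    interpret P: prob_space \<pi> by (rule pp)
    have cm: "(\<lambda>p. (norm (fst p - snd p))\<^sup>2) \<in> borel_measurable \<pi>" by (simp add: meas_pi[OF s])
    have fin: "(\<integral>\<^sup>+p. ennreal ((norm (fst p - snd p))\<^sup>2) \<partial>\<pi>) \<le> ennreal (4 * R\<^sup>2)"
      by (rule cost_bound[OF \<pi> a \<nu>K \<Omega> K])
    have ci: "integrable \<pi> (\<lambda>p. (norm (fst p - snd p))\<^sup>2)"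
      by (rule integrableI_bounded[OF cm]) (use fin in \<open>auto simp: top_unique less_top[symmetric]\<close>)
    have ceq: "(\<integral>\<^sup>+p. ennreal ((norm (fst p - snd p))\<^sup>2) \<partial>\<pi>) = ennreal (\<integral>p. (norm (fst p - snd p))\<^sup>2 \<partial>\<pi>)"
      by (rule nn_integral_eq_integral[OF ci]) simp
    have i1: "integrable \<pi> (\<lambda>p. \<phi> (fst p))"
      by (rule P.integrable_const_bound[where B=B]) (use \<phi>bd \<phi>m in \<open>auto simp: meas_pi[OF s]\<close>)
    have i2: "integrable \<pi> (\<lambda>p. \<psi> (snd p))"
      by (rule P.integrable_const_bound[where B="2*B"]) (use \<psi>bd \<psi>m in \<open>auto simp: meas_pi[OF s]\<close>)
    have "L = (\<integral>p. \<phi> (fst p) \<partial>\<pi>) + (\<integral>p. \<psi> (snd p) \<partial>\<pi>)"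
      unfolding L_def using coupling_fst_int[OF \<pi> \<phi>m] coupling_snd_int[OF \<pi> \<psi>m] by simp
    also have "\<dots> = (\<integral>p. \<phi> (fst p) + \<psi> (snd p) \<partial>\<pi>)" using Bochner_Integration.integral_add[OF i1 i2] by simp
    also have "\<dots> \<le> (\<integral>p. (norm (fst p - snd p))\<^sup>2 \<partial>\<pi>)"
      by (rule integral_mono[OF Bochner_Integration.integrable_add[OF i1 i2] ci]) (rule F1)
    finally show ?thesis unfolding ceq by (rule ennreal_leI)
  qed
  have pc: "a \<Otimes>\<^sub>M \<nu> \<in> couplings a \<nu>" by (rule product_coupling[OF a \<nu>K])
  have Wa_top: "W2sq a \<nu> < top"
  proof -
    have "W2sq a \<nu> \<le> (\<integral>\<^sup>+p. ennreal ((norm (fst p - snd p))\<^sup>2) \<partial>(a \<Otimes>\<^sub>M \<nu>))"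
      unfolding W2sq_def by (rule INF_lower[OF pc])
    also have "\<dots> \<le> ennreal (4 * R\<^sup>2)" by (rule cost_bound[OF pc a \<nu>K \<Omega> K])
    finally show ?thesis using ennreal_less_top le_less_trans by blast
  qed
  have "ennreal L \<le> W2sq a \<nu>" unfolding W2sq_def by (rule INF_greatest) (rule cost_ge)
  then have "enn2real (ennreal L) \<le> enn2real (W2sq a \<nu>)" by (rule enn2real_mono[OF _ Wa_top])
  then have lowA: "L \<le> enn2real (W2sq a \<nu>)"
    by (cases "0 \<le> L") (auto simp: enn2real_ennreal intro: order_trans[OF _ enn2real_nonneg])
  have pT: "distr b (borel \<Otimes>\<^sub>M borel) (\<lambda>x. (x, T x)) \<in> couplings b \<nu>"
    unfolding \<nu>_def by (rule map_coupling[OF b Tm])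
  have mT: "(\<lambda>x. (x, T x)) \<in> measurable b (borel \<Otimes>\<^sub>M borel)" using Tm by (simp add: meas_mu[OF sb])
  have iU: "integrable b (\<lambda>x. \<phi> x + \<psi> (T x))"
    by (rule Bp.integrable_const_bound[where B="3*B"]) (use \<phi>bd \<psi>bd \<phi>m \<psi>m Tm in \<open>auto simp: meas_mu[OF sb] intro!: AE_I2 order_trans[OF abs_triangle_ineq] add_mono[where b=B and d="2*B", simplified]\<close>)
  have AEpos: "AE x in b. 0 \<le> \<phi> x + \<psi> (T x)"
    using prob_on_AE[OF b] by eventually_elim (use F2 in \<open>auto intro: order_trans[OF zero_le_power2]\<close>)
  have "W2sq b \<nu> \<le> (\<integral>\<^sup>+p. ennreal ((norm (fst p - snd p))\<^sup>2) \<partial>(distr b (borel \<Otimes>\<^sub>M borel) (\<lambda>x. (x, T x))))"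
    unfolding W2sq_def by (rule INF_lower[OF pT])
  also have "\<dots> = (\<integral>\<^sup>+x. ennreal ((norm (x - T x))\<^sup>2) \<partial>b)"
    by (subst nn_integral_distr[OF mT]) auto
  also have "\<dots> \<le> (\<integral>\<^sup>+x. ennreal (\<phi> x + \<psi> (T x)) \<partial>b)"
    by (rule nn_integral_mono_AE) (use prob_on_AE[OF b] F2 in \<open>auto elim: AE_mp intro: ennreal_leI\<close>)
  also have "\<dots> = ennreal (\<integral>x. \<phi> x + \<psi> (T x) \<partial>b)" by (rule nn_integral_eq_integral[OF iU AEpos])
  finally have "W2sq b \<nu> \<le> ennreal (\<integral>x. \<phi> x + \<psi> (T x) \<partial>b)" .
  then have upB: "enn2real (W2sq b \<nu>) \<le> (\<integral>x. \<phi> x + \<psi> (T x) \<partial>b)"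
    by (intro enn2real_leI integral_nonneg_AE AEpos)
  have i3: "integrable b \<phi>"
    by (rule Bp.integrable_const_bound[where B=B]) (use \<phi>bd \<phi>m in \<open>auto simp: meas_mu[OF sb]\<close>)
  have i4: "integrable b (\<lambda>x. \<psi> (T x))"
    by (rule Bp.integrable_const_bound[where B="2*B"]) (use \<psi>bd \<psi>m Tm in \<open>auto simp: meas_mu[OF sb]\<close>)
  have "(\<integral>x. \<phi> x + \<psi> (T x) \<partial>b) = (\<integral>x. \<phi> x \<partial>b) + (\<integral>x. \<psi> (T x) \<partial>b)"
    by (rule Bochner_Integration.integral_add[OF i3 i4])
  also have "(\<integral>x. \<psi> (T x) \<partial>b) = (\<integral>y. \<psi> y \<partial>\<nu>)"
    unfolding \<nu>_def by (rule integral_distr[symmetric, OF Tmb \<psi>m])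
  finally have upB': "enn2real (W2sq b \<nu>) \<le> (\<integral>x. \<phi> x \<partial>b) + (\<integral>y. \<psi> y \<partial>\<nu>)" using upB by simp
  have phi_int: "(\<integral>x. \<phi> x \<partial>\<mu>) = (\<integral>x. (norm x)\<^sup>2 \<partial>\<mu>) - 2 * (\<integral>x. u x \<partial>\<mu>)"
    if \<mu>: "prob_on \<Omega> \<mu>" for \<mu>
  proof -
    have smu: "sets \<mu> = sets borel" using \<mu> by (simp add: prob_on_def)
    have nb: "\<bar>(norm x)\<^sup>2\<bar> \<le> R\<^sup>2" if "x \<in> \<Omega>" for x
    proof -
      have "norm x \<le> R" using that \<Omega> mem_cball_0 by blast
      then show ?thesis by (simp add: power_mono)
    qed
    have j1: "integrable \<mu> (\<lambda>x. (norm x)\<^sup>2)"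
      by (rule prob_on_integrable[OF \<mu> _ nb]) simp
    have j2: "integrable \<mu> u"
      by (rule prob_on_integrable[OF \<mu> um ub])
    have ae: "AE x in \<mu>. \<phi> x = (norm x)\<^sup>2 - 2 * u x"
      using prob_on_AE[OF \<mu>] by eventually_elim (rule F4)
    have "(\<integral>x. \<phi> x \<partial>\<mu>) = (\<integral>x. (norm x)\<^sup>2 - 2 * u x \<partial>\<mu>)"
      by (rule integral_cong_AE[OF _ _ ae]) (use \<phi>m um in \<open>simp_all add: meas_mu[OF smu]\<close>)
    also have "\<dots> = (\<integral>x. (norm x)\<^sup>2 \<partial>\<mu>) - (\<integral>x. 2 * u x \<partial>\<mu>)"
      by (rule Bochner_Integration.integral_diff[OF j1]) (use j2 in simp)
    finally show ?thesis by simp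
  qed
  have "Fct a b \<nu> \<le> D_CT K a b" by (rule Fct_le_D[OF a \<Omega> K \<nu>K])
  moreover have "((\<integral>x. \<phi> x \<partial>a) - (\<integral>x. \<phi> x \<partial>b)) / 2 \<le> Fct a b \<nu>"
    using lowA upB' unfolding Fct_def L_def by simp
  ultimately show ?thesis using phi_int[OF a] phi_int[OF b] by (simp add: field_simps)
qed


fun umax :: "('a::euclidean_space \<times> real) list \<Rightarrow> 'a \<Rightarrow> real" where
  "umax [] x = 0"
| "umax (p # ps) x = max (x \<bullet> fst p - snd p) (umax ps x)"

fun tsel :: "('a::euclidean_space \<times> real) list \<Rightarrow> 'a \<Rightarrow> 'a" where
  "tsel [] x = 0"
| "tsel (p # ps) x = (if umax ps x \<le> x \<bullet> fst p - snd p then fst p else tsel ps x)"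

lemma umax_sub: "umax ps x + (z - x) \<bullet> tsel ps x \<le> umax ps z"
proof (induction ps)
  case Nil then show ?case by simp
next
  case (Cons p ps)
  show ?case
  proof (cases "umax ps x \<le> x \<bullet> fst p - snd p")
    case True then show ?thesis by (simp add: inner_diff_left)
  next
    case False then show ?thesis using Cons.IH by simp
  qed
qed

lemma tsel_range: "tsel ps x \<in> insert 0 (fst ` set ps)"
  by (induction ps) auto

lemma umax_meas[measurable]: "umax ps \<in> borel_measurable borel"
  by (induction ps) (simp_all, measurable)

lemma tsel_meas[measurable]: "tsel ps \<in> borel_measurable borel"
proof (induction ps)
  case Nil then show ?case by simp
next
  case (Cons p ps)
  have eq: "tsel (p # ps) = (\<lambda>x. if umax ps x \<le> x \<bullet> fst p - snd p then fst p else tsel ps x)"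
    by (rule ext) simp
  show ?case unfolding eq using Cons.IH by measurable
qed

lemma umax_bound: "norm x \<le> R \<Longrightarrow> \<bar>umax ps x\<bar> \<le> (\<Sum>p\<leftarrow>ps. norm (fst p) * R + \<bar>snd p\<bar>)"
proof (induction ps)
  case Nil then show ?case by simp
next
  case (Cons p ps)
  have "\<bar>x \<bullet> fst p\<bar> \<le> norm x * norm (fst p)" by (rule Cauchy_Schwarz_ineq2)
  also have "\<dots> \<le> norm (fst p) * R" using mult_right_mono[OF Cons.prems norm_ge_zero[of "fst p"]] by (simp add: mult.commute)
  finally have "\<bar>x \<bullet> fst p - snd p\<bar> \<le> norm (fst p) * R + \<bar>snd p\<bar>" by linarith
  moreover have "0 \<le> (\<Sum>p\<leftarrow>ps. norm (fst p) * R + \<bar>snd p\<bar>)" using Cons by linarith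
  moreover have "0 \<le> norm (fst p) * R + \<bar>snd p\<bar>" using \<open>\<bar>x \<bullet> fst p - snd p\<bar> \<le> _\<close> by linarith
  ultimately show ?case using Cons by (simp add: abs_le_iff max_def)
qed

fun mn :: "real \<Rightarrow> ('a::euclidean_space \<times> real) list \<Rightarrow> 'a \<Rightarrow> real" where
  "mn C [] x = C"
| "mn C (p # L) x = min (x \<bullet> fst p - snd p) (mn C L x)"

lemma mn_meas[measurable]: "mn C L \<in> borel_measurable borel"
  by (induction L) (simp_all, measurable)

lemma mn_le_C: "mn C L x \<le> C" by (induction L) auto

lemma mn_le: "p \<in> set L \<Longrightarrow> mn C L x \<le> x \<bullet> fst p - snd p" by (induction L) auto

lemma mn_eq_C: "(\<And>p. p \<in> set L \<Longrightarrow> C \<le> x \<bullet> fst p - snd p) \<Longrightarrow> mn C L x = C"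
proof (induction L)
  case Nil then show ?case by simp
next
  case (Cons p L)
  have "C \<le> x \<bullet> fst p - snd p" using Cons.prems by simp
  moreover have "mn C L x = C" using Cons by simp
  ultimately show ?case by simp
qed

definition negL :: "('a::euclidean_space \<times> real) list \<Rightarrow> ('a \<times> real) list" where
  "negL L = map (\<lambda>p. (- fst p, - snd p)) L"

definition negC :: "real \<Rightarrow> ('a::euclidean_space \<times> real) list \<Rightarrow> ('a \<times> real) list" where
  "negC C L = map (\<lambda>p. (- fst p, - snd p - C)) L"

lemma umax_negL: "0 < C \<Longrightarrow> umax (negL L) x = max 0 (- mn C L x)"
  by (induction L) (auto simp: negL_def max_def min_def)

lemma umax_negC: "0 < C \<Longrightarrow> umax (negC C L) x = C - mn C L x"
proof (induction L)
  case Nil then show ?case by (simp add: negC_def)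
next
  case (Cons p L)
  then show ?case using mn_le_C[of C L x] by (auto simp: negC_def max_def min_def)
qed

lemma tent_repr: "0 < C \<Longrightarrow> max 0 (mn C L x) = umax (negL L) x - umax (negC C L) x + C"
  using umax_negL[of C L x] umax_negC[of C L x] by (simp add: max_def)

lemma negL_slopes: "fst ` set (negL L) = uminus ` fst ` set L"
  by (force simp: negL_def)

lemma negC_slopes: "fst ` set (negC C L) = uminus ` fst ` set L"
  by (force simp: negC_def)


lemma lemmaA_ps:
  fixes a b :: "'a::euclidean_space measure"
  assumes a: "prob_on \<Omega> a" and b: "prob_on \<Omega> b"
    and \<Omega>: "\<Omega> \<subseteq> cball 0 R" and K: "K \<subseteq> cball 0 R" and Kb: "K \<in> sets borel"
    and K0: "0 \<in> K" and ps: "fst ` set ps \<subseteq> K"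
  shows "((\<integral>x. (norm x)\<^sup>2 \<partial>a) - (\<integral>x. (norm x)\<^sup>2 \<partial>b)) / 2 - (\<integral>x. umax ps x \<partial>a) + (\<integral>x. umax ps x \<partial>b) \<le> D_CT K a b"
proof (rule lemmaA[OF a b \<Omega> K Kb])
  show "tsel ps x \<in> K" for x using tsel_range[of ps x] K0 ps by auto
  show "finite (range (tsel ps))"
    by (rule finite_subset[of _ "insert 0 (fst ` set ps)"]) (use tsel_range in auto)
qed (auto intro: umax_sub)

lemma test_eq:
  fixes a b :: "'a::euclidean_space measure"
  assumes a: "prob_on \<Omega> a" and b: "prob_on \<Omega> b"
    and \<Omega>: "\<Omega> \<subseteq> cball 0 R" and K: "K \<subseteq> cball 0 R" and Kb: "K \<in> sets borel"
    and K0: "0 \<in> K" and ps: "fst ` set ps \<subseteq> K" and d: "d_CT K a b = 0"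
  shows "(\<integral>x. umax ps x \<partial>a) = (\<integral>x. umax ps x \<partial>b)"
proof -
  note A1 = lemmaA_ps[OF a b \<Omega> K Kb K0 ps]
  have un: "umax [] = (\<lambda>x. 0::real)" by auto
  have A2: "((\<integral>x. (norm x)\<^sup>2 \<partial>b) - (\<integral>x. (norm x)\<^sup>2 \<partial>a)) / 2 \<le> D_CT K b a"
    using lemmaA_ps[OF b a \<Omega> K Kb K0, of "[]"] by (simp add: un)
  note A3 = lemmaA_ps[OF b a \<Omega> K Kb K0 ps]
  have A4: "((\<integral>x. (norm x)\<^sup>2 \<partial>a) - (\<integral>x. (norm x)\<^sup>2 \<partial>b)) / 2 \<le> D_CT K a b"
    using lemmaA_ps[OF a b \<Omega> K Kb K0, of "[]"] by (simp add: un)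
  have "D_CT K a b + D_CT K b a = 0" using d by (simp add: d_CT_def)
  then show ?thesis using A1 A2 A3 A4 by argo
qed

lemma umax_integrable:
  assumes "prob_on \<Omega> \<mu>" "\<Omega> \<subseteq> cball 0 R"
  shows "integrable \<mu> (umax ps)"
  by (rule prob_on_integrable[OF assms(1) umax_meas umax_bound]) (use assms(2) mem_cball_0 in blast)

lemma tent_eq:
  fixes a b :: "'a::euclidean_space measure"
  assumes a: "prob_on \<Omega> a" and b: "prob_on \<Omega> b"
    and \<Omega>: "\<Omega> \<subseteq> cball 0 R" and K: "K \<subseteq> cball 0 R" and Kb: "K \<in> sets borel"
    and K0: "0 \<in> K" and L: "uminus ` fst ` set L \<subseteq> K" and d: "d_CT K a b = 0" and C: "0 < C"
  shows "(\<integral>x. max 0 (mn C L x) \<partial>a) = (\<integral>x. max 0 (mn C L x) \<partial>b)"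
proof -
  have I: "(\<integral>x. max 0 (mn C L x) \<partial>\<mu>) = (\<integral>x. umax (negL L) x \<partial>\<mu>) - (\<integral>x. umax (negC C L) x \<partial>\<mu>) + C"
    if \<mu>: "prob_on \<Omega> \<mu>" for \<mu>
  proof -
    interpret prob_space \<mu> using \<mu> by (simp add: prob_on_def)
    have i1: "integrable \<mu> (umax (negL L))" by (rule umax_integrable[OF \<mu> \<Omega>])
    have i2: "integrable \<mu> (umax (negC C L))" by (rule umax_integrable[OF \<mu> \<Omega>])
    have "(\<integral>x. max 0 (mn C L x) \<partial>\<mu>) = (\<integral>x. (umax (negL L) x - umax (negC C L) x) + C \<partial>\<mu>)"
      by (simp add: tent_repr[OF C])
    also have "\<dots> = (\<integral>x. umax (negL L) x - umax (negC C L) x \<partial>\<mu>) + (\<integral>x. C \<partial>\<mu>)"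
      by (rule Bochner_Integration.integral_add) (use i1 i2 in auto)
    also have "(\<integral>x. umax (negL L) x - umax (negC C L) x \<partial>\<mu>) = (\<integral>x. umax (negL L) x \<partial>\<mu>) - (\<integral>x. umax (negC C L) x \<partial>\<mu>)"
      by (rule Bochner_Integration.integral_diff[OF i1 i2])
    finally show ?thesis by (simp add: prob_space)
  qed
  have e1: "(\<integral>x. umax (negL L) x \<partial>a) = (\<integral>x. umax (negL L) x \<partial>b)"
    by (rule test_eq[OF a b \<Omega> K Kb K0 _ d]) (unfold negL_slopes, rule L)
  have e2: "(\<integral>x. umax (negC C L) x \<partial>a) = (\<integral>x. umax (negC C L) x \<partial>b)"
    by (rule test_eq[OF a b \<Omega> K Kb K0 _ d]) (unfold negC_slopes, rule L)
  show ?thesis using I[OF a] I[OF b] e1 e2 by simp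
qed


lemma box_eq:
  fixes a b :: "'a::euclidean_space measure"
  assumes a: "prob_on \<Omega> a" and b: "prob_on \<Omega> b"
    and \<Omega>: "\<Omega> \<subseteq> cball 0 R" and K: "K \<subseteq> cball 0 R" and Kb: "K \<in> sets borel"
    and K0: "0 \<in> K" and r: "0 < r" "ball 0 r \<subseteq> K" and d: "d_CT K a b = 0"
  shows "measure a (box lo hi) = measure b (box lo hi)"
proof -
  define s where "s = r / 2"
  have s0: "0 < s" using r by (simp add: s_def)
  obtain bl where bl: "set bl = (Basis :: 'a set)" using finite_list[OF finite_Basis] by blast
  define L where "L = concat (map (\<lambda>i. [(s *\<^sub>R i, s * (lo \<bullet> i)), (-(s *\<^sub>R i), -(s * (hi \<bullet> i)))]) bl)"
  have Lmem: "p \<in> set L \<longleftrightarrow> (\<exists>i\<in>Basis. p = (s *\<^sub>R i, s * (lo \<bullet> i)) \<or> p = (-(s *\<^sub>R i), -(s * (hi \<bullet> i))))" for p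
    unfolding L_def using bl by auto
  have Lval: "x \<bullet> fst p - snd p = s * (x \<bullet> i - lo \<bullet> i) \<or> x \<bullet> fst p - snd p = s * (hi \<bullet> i - x \<bullet> i)"
    if "p = (s *\<^sub>R i, s * (lo \<bullet> i)) \<or> p = (-(s *\<^sub>R i), -(s * (hi \<bullet> i)))" for p x i
    using that by (auto simp: algebra_simps)
  have slopes: "uminus ` fst ` set L \<subseteq> K"
  proof
    fix y assume "y \<in> uminus ` fst ` set L"
    then obtain p where p: "p \<in> set L" "y = - fst p" by auto
    then obtain i where i: "i \<in> Basis" "p = (s *\<^sub>R i, s * (lo \<bullet> i)) \<or> p = (-(s *\<^sub>R i), -(s * (hi \<bullet> i)))"
      using Lmem by blast
    have "norm y = s" using i p s0 by auto
    then have "y \<in> ball 0 r" using s0 r by (simp add: s_def)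
    then show "y \<in> K" using r by auto
  qed
  define C where "C n = s / (real n + 1)" for n :: nat
  have C0: "0 < C n" for n using s0 by (simp add: C_def)
  define G where "G n x = max 0 (mn (C n) L x) / C n" for n x
  have Gm: "G n \<in> borel_measurable borel" for n unfolding G_def by measurable
  have Gb: "norm (G n x) \<le> 1" for n x
    using mn_le_C[of "C n" L x] C0[of n] unfolding G_def by (auto simp: divide_le_eq_1)
  have Geq: "(\<integral>x. G n x \<partial>a) = (\<integral>x. G n x \<partial>b)" for n
    unfolding G_def using tent_eq[OF a b \<Omega> K Kb K0 slopes d C0[of n]] by simp
  have lim: "(\<lambda>n. G n x) \<longlonglongrightarrow> indicator (box lo hi) x" for x
  proof (cases "x \<in> box lo hi")
    case True
    then have pos: "\<forall>i\<in>Basis. 0 < min (x \<bullet> i - lo \<bullet> i) (hi \<bullet> i - x \<bullet> i)" by (auto simp: mem_box)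
    define \<eta> where "\<eta> = Min ((\<lambda>i. min (x \<bullet> i - lo \<bullet> i) (hi \<bullet> i - x \<bullet> i)) ` Basis)"
    have \<eta>0: "0 < \<eta>" unfolding \<eta>_def using pos by (subst Min_gr_iff) auto
    have \<eta>le: "\<eta> \<le> min (x \<bullet> i - lo \<bullet> i) (hi \<bullet> i - x \<bullet> i)" if "i \<in> Basis" for i
      unfolding \<eta>_def using that by (intro Min_le) auto
    obtain N :: nat where N: "1 / \<eta> < real N" using reals_Archimedean2 by blast
    have "G n x = 1" if "N \<le> n" for n
    proof -
      have "1 / \<eta> < real n + 1" using N that by linarith
      then have d1: "1 / (real n + 1) < \<eta>" using \<eta>0 by (simp add: divide_less_eq field_simps)
      have "mn (C n) L x = C n"
      proof (rule mn_eq_C)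
        fix p assume "p \<in> set L"
        then obtain i where i: "i \<in> Basis" "p = (s *\<^sub>R i, s * (lo \<bullet> i)) \<or> p = (-(s *\<^sub>R i), -(s * (hi \<bullet> i)))"
          using Lmem by blast
        have "C n = s * (1 / (real n + 1))" by (simp add: C_def)
        also have "\<dots> \<le> s * \<eta>" using mult_left_mono[OF less_imp_le[OF d1], of s] s0 by simp
        also have "\<dots> \<le> s * min (x \<bullet> i - lo \<bullet> i) (hi \<bullet> i - x \<bullet> i)" using \<eta>le[OF i(1)] s0 by simp
        finally have m: "C n \<le> s * min (x \<bullet> i - lo \<bullet> i) (hi \<bullet> i - x \<bullet> i)" .
        have "C n \<le> s * (x \<bullet> i - lo \<bullet> i)"
          using order_trans[OF m mult_left_mono[OF min.cobounded1 less_imp_le[OF s0]]] .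
        moreover have "C n \<le> s * (hi \<bullet> i - x \<bullet> i)"
          using order_trans[OF m mult_left_mono[OF min.cobounded2 less_imp_le[OF s0]]] .
        ultimately show "C n \<le> x \<bullet> fst p - snd p" using Lval[OF i(2), of x] by auto
      qed
      then show ?thesis unfolding G_def using C0[of n] by simp
    qed
    then have "\<forall>\<^sub>F n in sequentially. G n x = indicator (box lo hi) x"
      using True unfolding eventually_sequentially by auto
    then show ?thesis by (rule tendsto_eventually)
  next
    case False
    then obtain i where i: "i \<in> Basis" "x \<bullet> i \<le> lo \<bullet> i \<or> hi \<bullet> i \<le> x \<bullet> i"
      by (auto simp: mem_box not_less)
    have "G n x = 0" for n
    proof -
      consider "x \<bullet> i \<le> lo \<bullet> i" | "hi \<bullet> i \<le> x \<bullet> i" using i by blast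
      then have "mn (C n) L x \<le> 0"
      proof cases
        case 1
        have "(s *\<^sub>R i, s * (lo \<bullet> i)) \<in> set L" using Lmem i by blast
        from mn_le[OF this, of "C n" x] have "mn (C n) L x \<le> s * (x \<bullet> i - lo \<bullet> i)"
          by (simp add: algebra_simps)
        also have "\<dots> \<le> 0" using 1 s0 by (simp add: mult_nonneg_nonpos)
        finally show ?thesis .
      next
        case 2
        have "(-(s *\<^sub>R i), -(s * (hi \<bullet> i))) \<in> set L" using Lmem i by blast
        from mn_le[OF this, of "C n" x] have "mn (C n) L x \<le> s * (hi \<bullet> i - x \<bullet> i)"
          by (simp add: algebra_simps)
        also have "\<dots> \<le> 0" using 2 s0 by (simp add: mult_nonneg_nonpos)
        finally show ?thesis .
      qed
      then show ?thesis unfolding G_def by simp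
    qed
    then show ?thesis using False by simp
  qed
  have conv: "(\<lambda>n. \<integral>x. G n x \<partial>\<mu>) \<longlonglongrightarrow> measure \<mu> (box lo hi)" if \<mu>: "prob_on \<Omega> \<mu>" for \<mu>
  proof -
    interpret prob_space \<mu> using \<mu> by (simp add: prob_on_def)
    have sm: "sets \<mu> = sets borel" using \<mu> by (simp add: prob_on_def)
    have sp: "space \<mu> = UNIV" using sm space_borel_eq by auto
    have "(\<lambda>n. \<integral>x. G n x \<partial>\<mu>) \<longlonglongrightarrow> (\<integral>x. indicator (box lo hi) x \<partial>\<mu>)"
      by (rule integral_dominated_convergence[where w="\<lambda>x. 1"])
         (use Gm Gb lim in \<open>auto simp: meas_mu[OF sm]\<close>)
    then show ?thesis by (simp add: sp)
  qed
  have "(\<lambda>n. \<integral>x. G n x \<partial>a) \<longlonglongrightarrow> measure b (box lo hi)" using conv[OF b] Geq by simp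
  then show ?thesis using conv[OF a] LIMSEQ_unique by blast
qed


lemma prob_eq_boxes:
  fixes a b :: "'a::euclidean_space measure"
  assumes a: "prob_on S a" and b: "prob_on S' b"
    and eq: "\<And>lo hi. measure a (box lo hi) = measure b (box lo hi)"
  shows "a = b"
proof -
  interpret A: prob_space a using a by (simp add: prob_on_def)
  interpret B: prob_space b using b by (simp add: prob_on_def)
  have sa: "sets a = sets borel" and sb: "sets b = sets borel" using a b by (auto simp: prob_on_def)
  show ?thesis
  proof (rule measure_eqI_generator_eq[where E="range (\<lambda>(a, b). box a b)" and \<Omega>=UNIV])
    show "Int_stable (range (\<lambda>(a, b). box a b :: 'a set))"
      by (auto simp: Int_stable_def box_Int_box)
    show "range (\<lambda>(a, b). box a b) \<subseteq> Pow (UNIV :: 'a set)" by simp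
    show "sets a = sigma_sets UNIV (range (\<lambda>(a, b). box a b))"
      by (simp add: sa borel_eq_box)
    show "sets b = sigma_sets UNIV (range (\<lambda>(a, b). box a b))"
      by (simp add: sb borel_eq_box)
    let ?A = "\<lambda>n::nat. box (- (real n *\<^sub>R One)) (real n *\<^sub>R One) :: 'a set"
    show "range ?A \<subseteq> range (\<lambda>(a, b). box a b)" "(\<Union>i. ?A i) = UNIV"
      unfolding UN_box_eq_UNIV by auto
    show "emeasure a (?A i) \<noteq> \<infinity>" for i by (simp add: A.emeasure_eq_measure)
    show "emeasure a X = emeasure b X" if "X \<in> range (\<lambda>(a, b). box a b)" for X
      using that eq by (auto simp: A.emeasure_eq_measure B.emeasure_eq_measure)
  qed
qed

theorem theorem2:
  fixes \<Omega> K :: "'a::euclidean_space set"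
  assumes "open \<Omega>" and "bounded \<Omega>" and "convex \<Omega>"
    and "compact K" and "0 \<in> interior K"
  shows "(\<forall>\<mu>p \<mu>m. prob_on \<Omega> \<mu>p \<and> prob_on \<Omega> \<mu>m \<longrightarrow> d_CT K \<mu>p \<mu>m \<ge> 0)
    \<and> (\<forall>\<mu>p \<mu>m. prob_on \<Omega> \<mu>p \<and> prob_on \<Omega> \<mu>m \<longrightarrow> (d_CT K \<mu>p \<mu>m = 0 \<longleftrightarrow> \<mu>p = \<mu>m))
    \<and> (\<forall>\<mu>1 \<mu>2 \<mu>3. prob_on \<Omega> \<mu>1 \<and> prob_on \<Omega> \<mu>2 \<and> prob_on \<Omega> \<mu>3 \<longrightarrow>
          d_CT K \<mu>1 \<mu>2 \<le> d_CT K \<mu>1 \<mu>3 + d_CT K \<mu>3 \<mu>2)"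
proof -
  obtain R1 where R1': "\<forall>x\<in>\<Omega>. norm x \<le> R1" using bounded_pos[THEN iffD1, OF assms(2)] by blast
  obtain R2 where R2': "\<forall>x\<in>K. norm x \<le> R2" using bounded_pos[THEN iffD1, OF compact_imp_bounded[OF assms(4)]] by blast
  have R1: "\<Omega> \<subseteq> cball 0 R1" using R1' by (simp add: subset_iff mem_cball_0)
  have R2: "K \<subseteq> cball 0 R2" using R2' by (simp add: subset_iff mem_cball_0)
  define R where "R = max R1 R2"
  have RR: "R1 \<le> R" "R2 \<le> R" unfolding R_def by simp_all
  have \<Omega>R: "\<Omega> \<subseteq> cball 0 R" using R1 subset_cball[OF RR(1), of 0] by (rule order_trans)
  have KR: "K \<subseteq> cball 0 R" using R2 subset_cball[OF RR(2), of 0] by (rule order_trans)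
  have Kb: "K \<in> sets borel" using borel_closed compact_imp_closed[OF assms(4)] by blast
  have K0: "0 \<in> K" using assms(5) interior_subset by blast
  obtain r where r: "0 < r" "ball 0 r \<subseteq> K" using mem_interior[THEN iffD1, OF assms(5)] by blast
  have nu0: "prob_on K (return borel 0)" by (rule dirac_prob_on[OF K0 Kb])
  have ne: "{\<nu>. prob_on K \<nu>} \<noteq> {}" using nu0 by auto
  have P1: "d_CT K a b \<ge> 0" if a: "prob_on \<Omega> a" and b: "prob_on \<Omega> b" for a b
  proof -
    have "Fct a b (return borel 0) \<le> D_CT K a b" by (rule Fct_le_D[OF a \<Omega>R KR nu0])
    moreover have "Fct b a (return borel 0) \<le> D_CT K b a" by (rule Fct_le_D[OF b \<Omega>R KR nu0])
    ultimately show ?thesis unfolding d_CT_def using Fct_antisym[of b a "return borel 0"] by linarith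
  qed
  have Dself: "D_CT K a a = 0" for a
    unfolding D_CT_Fct Fct_def using ne by simp
  have P2: "d_CT K a b = 0 \<longleftrightarrow> a = b" if a: "prob_on \<Omega> a" and b: "prob_on \<Omega> b" for a b
  proof
    assume d: "d_CT K a b = 0"
    show "a = b"
      by (rule prob_eq_boxes[OF a b box_eq[OF a b \<Omega>R KR Kb K0 r d]])
  next
    assume "a = b" then show "d_CT K a b = 0" by (simp add: d_CT_def Dself)
  qed
  have Dtri: "D_CT K a b \<le> D_CT K a c + D_CT K c b"
    if a: "prob_on \<Omega> a" and b: "prob_on \<Omega> b" and c: "prob_on \<Omega> c" for a b c
    unfolding D_CT_Fct[of K a b]
  proof (rule cSUP_least[OF ne])
    fix \<nu> assume "\<nu> \<in> {\<nu>. prob_on K \<nu>}"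
    then have \<nu>: "prob_on K \<nu>" by simp
    have "Fct a b \<nu> = Fct a c \<nu> + Fct c b \<nu>" by (rule Fct_split)
    also have "\<dots> \<le> D_CT K a c + D_CT K c b"
      using Fct_le_D[OF a \<Omega>R KR \<nu>] Fct_le_D[OF c \<Omega>R KR \<nu>] by (rule add_mono)
    finally show "Fct a b \<nu> \<le> D_CT K a c + D_CT K c b" .
  qed
  have P3: "d_CT K a b \<le> d_CT K a c + d_CT K c b"
    if a: "prob_on \<Omega> a" and b: "prob_on \<Omega> b" and c: "prob_on \<Omega> c" for a b c
    using Dtri[OF a b c] Dtri[OF b a c] unfolding d_CT_def by linarith
  show ?thesis using P1 P2 P3 by blast
qed

end
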